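(* Let $X$ be a space such that $\mathcal{N}_\Delta^{X^2}$ has calibre $(\omega_1,\omega)$. If $X$ is countably compact then $X$ is compact (and metrizable).
   Context: All spaces are Tychonoff. $\mathcal{N}_\Delta^{X^2}$ is the family of open neighborhoods of the diagonal $\Delta$ in $X^2$, ordered by reverse inclusion. A directed set has calibre $(\omega_1,\omega)$ if every uncountable subset contains an infinite subset with an upper bound. *)

theory Defs
  imports "HOL-Analysis.Analysis"
begin

definition tychonoff_space :: "'a topology \<Rightarrow> bool" where
  "tychonoff_space X \<longleftrightarrow> completely_regular_space X \<and> t1_space X"

definition countably_compact_space :: "'a topology \<Rightarrow> bool" where
  "countably_compact_space X \<longleftrightarrow>
     (\<forall>\<C>. countable \<C> \<and> (\<forall>U\<in>\<C>. openin X U) \<and> topspace X \<subseteq> \<Union>\<C>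
        \<longrightarrow> (\<exists>\<F>\<subseteq>\<C>. finite \<F> \<and> topspace X \<subseteq> \<Union>\<F>))"

definition diag_nbhds :: "'a topology \<Rightarrow> ('a \<times> 'a) set set" where
  "diag_nbhds X = {U. openin (prod_topology X X) U \<and> (\<lambda>x. (x, x)) ` topspace X \<subseteq> U}"

definition calibre_omega1_omega :: "'b set \<Rightarrow> ('b \<Rightarrow> 'b \<Rightarrow> bool) \<Rightarrow> bool" where
  "calibre_omega1_omega D le \<longleftrightarrow>
     (\<forall>S\<subseteq>D. uncountable S \<longrightarrow> (\<exists>T\<subseteq>S. infinite T \<and> (\<exists>u\<in>D. \<forall>t\<in>T. le t u)))"

end

theory Submission
  imports Defs
begin

lemma calibre_family:
  assumes cal: "calibre_omega1_omega D (\<lambda>U V. V \<subseteq> U)" and unc: "uncountable I" and WI: "W ` I \<subseteq> D"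
  shows "\<exists>J\<subseteq>I. infinite J \<and> (\<exists>u\<in>D. \<forall>i\<in>J. u \<subseteq> W i)"
proof (cases "uncountable (W ` I)")
  case True
  then have "\<exists>T\<subseteq>W ` I. infinite T \<and> (\<exists>u\<in>D. \<forall>t\<in>T. u \<subseteq> t)"
    using cal WI unfolding calibre_omega1_omega_def by simp
  then obtain T u where T: "T \<subseteq> W ` I" "infinite T" "u \<in> D" "\<forall>t\<in>T. u \<subseteq> t"
    by blast
  define J where "J = inv_into I W ` T"
  have "inj_on (inv_into I W) T" using T(1) by (rule inj_on_inv_into)
  then have "infinite J" using T(2) J_def finite_imageD by blast
  moreover have "J \<subseteq> I" using T(1) J_def by (auto intro: inv_into_into)
  moreover have "\<forall>i\<in>J. u \<subseteq> W i"
  proof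
    fix i assume "i \<in> J"
    then obtain t where t: "t \<in> T" "i = inv_into I W t" using J_def by blast
    then have "W i = t" using T(1) f_inv_into_f by (metis subsetD)
    then show "u \<subseteq> W i" using T(4) t(1) by simp
  qed
  ultimately show ?thesis using T(3) by blast
next
  case False
  have "\<exists>d\<in>W ` I. infinite {i\<in>I. W i = d}"
  proof (rule ccontr)
    assume "\<not> ?thesis"
    then have "\<forall>d\<in>W ` I. countable {i\<in>I. W i = d}" by (auto intro: countable_finite)
    then have "countable (\<Union>d\<in>W ` I. {i\<in>I. W i = d})"
      using False by (intro countable_UN) auto
    moreover have "I \<subseteq> (\<Union>d\<in>W ` I. {i\<in>I. W i = d})" by auto
    ultimately show False using unc countable_subset by blast
  qed
  then obtain d where "d \<in> W ` I" "infinite {i\<in>I. W i = d}" by blast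
  then show ?thesis using WI by (intro exI[of _ "{i\<in>I. W i = d}"]) auto
qed

lemma cc_discrete:
  assumes cc: "countably_compact_space X" and t1: "t1_space X" and AX: "A \<subseteq> topspace X" and inf: "infinite A"
    and loc: "\<And>z. z \<in> topspace X \<Longrightarrow> \<exists>N. openin X N \<and> z \<in> N \<and> (\<forall>a\<in>A\<inter>N. \<forall>b\<in>A\<inter>N. a = b)"
  shows False
proof -
  obtain c :: "nat \<Rightarrow> 'a" where c: "inj c" "range c \<subseteq> A" using infinite_countable_subset inf by blast
  define U where "U n = topspace X - c ` {n..}" for n
  have opn: "openin X (U n)" for n
  proof (subst openin_subopen, intro ballI)
    fix x assume x: "x \<in> U n"
    then have xt: "x \<in> topspace X" and xn: "x \<notin> c ` {n..}" by (auto simp: U_def)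
    obtain N where N: "openin X N" "x \<in> N" "\<forall>a\<in>A\<inter>N. \<forall>b\<in>A\<inter>N. a = b" using loc xt by blast
    define F where "F = c ` {n..} \<inter> N"
    have Fsub: "F \<subseteq> A \<inter> N" using c F_def by auto
    have "finite F"
    proof (cases "F = {}")
      case False
      then obtain a where "a \<in> F" by blast
      then have "F \<subseteq> {a}" using Fsub N(3) by blast
      then show ?thesis using finite_subset by blast
    qed simp
    then have "closedin X F" using t1 Fsub AX t1_space_closedin_finite by blast
    then have "openin X (N - F)" using N(1) by (simp add: openin_diff)
    moreover have "x \<in> N - F" using N(2) xn F_def by auto
    moreover have "N - F \<subseteq> U n" using openin_subset[OF N(1)] F_def U_def by auto
    ultimately show "\<exists>T. openin X T \<and> x \<in> T \<and> T \<subseteq> U n" by blast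
  qed
  have cov: "topspace X \<subseteq> \<Union>(range U)"
  proof
    fix x assume x: "x \<in> topspace X"
    show "x \<in> \<Union>(range U)"
    proof (cases "x \<in> range c")
      case True
      then obtain m where m: "x = c m" by blast
      have "x \<notin> c ` {Suc m..}" using c(1) m by (auto simp: inj_eq)
      then have "x \<in> U (Suc m)" using x U_def by auto
      then show ?thesis by blast
    next
      case False
      then have "x \<in> U 0" using x U_def by auto
      then show ?thesis by blast
    qed
  qed
  obtain F where F: "F \<subseteq> range U" "finite F" "topspace X \<subseteq> \<Union>F"
  proof -
    have "countable (range U)" by simp
    moreover have "\<forall>V\<in>range U. openin X V" using opn by blast
    ultimately have "\<exists>F\<subseteq>range U. finite F \<and> topspace X \<subseteq> \<Union>F"
      using cc cov unfolding countably_compact_space_def by simp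
    then show ?thesis using that by blast
  qed
  then obtain K where K: "finite K" "F = U ` K" by (meson finite_subset_image subset_UNIV)
  define n where "n = Max (insert 0 K)"
  have mono: "U k \<subseteq> U n" if "k \<in> K" for k
  proof -
    have "k \<le> n" using that K(1) n_def by simp
    then show ?thesis by (auto simp: U_def)
  qed
  have "c n \<in> topspace X" using c AX by auto
  then obtain k where "k \<in> K" "c n \<in> U k" using F(3) K(2) by auto
  then have "c n \<in> U n" using mono by blast
  then show False by (auto simp: U_def)
qed

lemma cc_compact:
  assumes t1: "t1_space X" and cal: "calibre_omega1_omega (diag_nbhds X) (\<lambda>U V. V \<subseteq> U)"
    and cc: "countably_compact_space X"
  shows "compact_space X"
proof (rule ccontr)
  assume "\<not> compact_space X"
  then obtain \<U> where Uo: "\<forall>U\<in>\<U>. openin X U" and Uc: "topspace X \<subseteq> \<Union>\<U>"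
    and nofin: "\<not> (\<exists>\<F>. finite \<F> \<and> \<F> \<subseteq> \<U> \<and> topspace X \<subseteq> \<Union>\<F>)"
    unfolding compact_space_alt by blast
  have nocount: False if "\<V> \<subseteq> \<U>" "countable \<V>" "topspace X \<subseteq> \<Union>\<V>" for \<V>
  proof -
    have "\<forall>U\<in>\<V>. openin X U" using that(1) Uo by blast
    then have "\<exists>\<F>\<subseteq>\<V>. finite \<F> \<and> topspace X \<subseteq> \<Union>\<F>"
      using cc that(2,3) unfolding countably_compact_space_def by simp
    then show False using nofin that(1) by blast
  qed
  define P where "P = {(x,U). U \<in> \<U> \<and> x \<in> U}"
  define sep where "sep S \<longleftrightarrow> (\<forall>p\<in>S. \<forall>q\<in>S. p \<noteq> q \<longrightarrow> fst q \<notin> snd p \<or> fst p \<notin> snd q)" for S :: "('a \<times> 'a set) set"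
  define A where "A = {S. S \<subseteq> P \<and> sep S}"
  have "\<forall>C\<in>chains A. \<Union>C \<in> A"
  proof
    fix C assume C: "C \<in> chains A"
    then have CA: "C \<subseteq> A" and ch: "\<forall>S1\<in>C. \<forall>S2\<in>C. S1 \<subseteq> S2 \<or> S2 \<subseteq> S1"
      unfolding chains_def chain_subset_def by auto
    have "\<Union>C \<subseteq> P" using CA A_def by auto
    moreover have "sep (\<Union>C)"
      unfolding sep_def
    proof (intro ballI impI)
      fix p q assume p: "p \<in> \<Union>C" and q: "q \<in> \<Union>C" and pq: "p \<noteq> q"
      then obtain S1 S2 where S: "S1 \<in> C" "S2 \<in> C" "p \<in> S1" "q \<in> S2" by blast
      then have "p \<in> S1 \<union> S2 \<and> q \<in> S1 \<union> S2" by blast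
      moreover have "S1 \<union> S2 \<in> C" using ch S(1,2) by (metis sup.absorb1 sup.absorb2)
      ultimately obtain S where "S \<in> C" "p \<in> S" "q \<in> S" by blast
      then have "sep S" using CA A_def by auto
      then show "fst q \<notin> snd p \<or> fst p \<notin> snd q" using \<open>p \<in> S\<close> \<open>q \<in> S\<close> pq sep_def by blast
    qed
    ultimately show "\<Union>C \<in> A" using A_def by blast
  qed
  then obtain M where MA: "M \<in> A" and Mmax: "\<forall>S\<in>A. M \<subseteq> S \<longrightarrow> S = M"
    using Zorn_Lemma by blast
  have MP: "M \<subseteq> P" and Msep: "sep M" using MA A_def by auto
  have unc: "uncountable M"
  proof
    assume cM: "countable M"
    have "snd ` M \<subseteq> \<U>" using MP P_def by auto
    moreover have "countable (snd ` M)" using cM by simp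
    ultimately have "\<not> topspace X \<subseteq> \<Union>(snd ` M)" using nocount by blast
    then obtain y where y: "y \<in> topspace X" "y \<notin> \<Union>(snd ` M)" by blast
    then obtain U where U: "U \<in> \<U>" "y \<in> U" using Uc by blast
    have "insert (y,U) M \<subseteq> P" using MP U P_def by auto
    moreover have "sep (insert (y,U) M)" unfolding sep_def
    proof (intro ballI impI)
      fix p q assume p: "p \<in> insert (y,U) M" and q: "q \<in> insert (y,U) M" and pq: "p \<noteq> q"
      show "fst q \<notin> snd p \<or> fst p \<notin> snd q"
      proof (cases "p = (y,U)")
        case True
        then have "q \<in> M" using q pq by auto
        then have "fst p \<notin> snd q" using y(2) True by auto
        then show ?thesis ..
      next
        case False
        then have pM: "p \<in> M" using p by auto
        show ?thesis
        proof (cases "q = (y,U)")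
          case True
          then have "fst q \<notin> snd p" using y(2) pM by auto
          then show ?thesis ..
        next
          case False
          then have "q \<in> M" using q by auto
          then show ?thesis using Msep pM pq unfolding sep_def by blast
        qed
      qed
    qed
    ultimately have "insert (y,U) M \<in> A" using A_def by blast
    then have "insert (y,U) M = M" using Mmax by blast
    then have "(y,U) \<in> M" by blast
    then have "U \<in> snd ` M" by (metis image_eqI snd_conv)
    then show False using y(2) U(2) by blast
  qed
  have PX: "fst p \<in> snd p \<and> snd p \<in> \<U>" if "p \<in> M" for p using that MP P_def by auto
  define W where "W p = (snd p \<times> snd p) \<union> ((topspace X - {fst p}) \<times> (topspace X - {fst p}))" for p :: "'a \<times> 'a set"
  have WD: "W ` M \<subseteq> diag_nbhds X"
  proof
    fix w assume "w \<in> W ` M"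
    then obtain p where p: "p \<in> M" "w = W p" by blast
    have o1: "openin X (snd p)" using PX[OF p(1)] Uo by blast
    have o2: "openin X (topspace X - {fst p})" using t1_space_openin_delete_alt[THEN iffD1, OF t1, rule_format, OF openin_topspace] .
    have "openin (prod_topology X X) w"
      unfolding p(2) W_def using o1 o2 by (intro openin_Un) (simp_all add: openin_prod_Times_iff)
    moreover have "(\<lambda>x. (x, x)) ` topspace X \<subseteq> w"
      using PX[OF p(1)] unfolding p(2) W_def by auto
    ultimately show "w \<in> diag_nbhds X" unfolding diag_nbhds_def by blast
  qed
  obtain J u where J: "J \<subseteq> M" "infinite J" and u: "u \<in> diag_nbhds X" "\<forall>p\<in>J. u \<subseteq> W p"
    using calibre_family[OF cal unc WD] by blast
  have injM: "inj_on fst M"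
  proof
    fix p q assume "p \<in> M" "q \<in> M" "fst p = fst q"
    note pq = this
    show "p = q"
    proof (rule ccontr)
      assume "p \<noteq> q"
      then have "fst q \<notin> snd p \<or> fst p \<notin> snd q" using Msep pq(1,2) unfolding sep_def by blast
      then show False using PX[OF pq(1)] PX[OF pq(2)] pq(3) by simp
    qed
  qed
  define A' where "A' = fst ` J"
  have "inj_on fst J" using inj_on_subset[OF injM J(1)] .
  then have infA: "infinite A'" using J(2) A'_def finite_imageD by blast
  have AX: "A' \<subseteq> topspace X"
  proof
    fix a assume "a \<in> A'"
    then obtain p where p: "p \<in> J" "a = fst p" using A'_def by blast
    have pM: "p \<in> M" using J(1) p(1) by blast
    have "a \<in> snd p" "openin X (snd p)" using PX[OF pM] p(2) Uo by auto
    then show "a \<in> topspace X" using openin_subset by blast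
  qed
  have loc: "\<exists>N. openin X N \<and> z \<in> N \<and> (\<forall>a\<in>A'\<inter>N. \<forall>b\<in>A'\<inter>N. a = b)" if z: "z \<in> topspace X" for z
  proof -
    have uo: "openin (prod_topology X X) u" and zz: "(z,z) \<in> u" using u(1) z unfolding diag_nbhds_def by auto
    have "\<exists>U V. openin X U \<and> openin X V \<and> z \<in> U \<and> z \<in> V \<and> U \<times> V \<subseteq> u"
      using uo zz unfolding openin_prod_topology_alt by simp
    then obtain U1 V1 where UV: "openin X U1" "openin X V1" "z \<in> U1" "z \<in> V1" "U1 \<times> V1 \<subseteq> u"
      by blast
    have "\<forall>a\<in>A'\<inter>(U1\<inter>V1). \<forall>b\<in>A'\<inter>(U1\<inter>V1). a = b"
    proof (intro ballI, rule ccontr)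
      fix a b assume a: "a \<in> A'\<inter>(U1\<inter>V1)" and b: "b \<in> A'\<inter>(U1\<inter>V1)" and ab: "a \<noteq> b"
      obtain p q where pq: "p \<in> J" "q \<in> J" "a = fst p" "b = fst q" using a b A'_def by blast
      have "(a,b) \<in> U1 \<times> V1" "(b,a) \<in> U1 \<times> V1" using a b by auto
      then have "(a,b) \<in> u" "(b,a) \<in> u" using UV(5) by (meson subsetD)+
      moreover have "u \<subseteq> W p" "u \<subseteq> W q" using u(2) pq(1,2) by simp_all
      ultimately have "(a,b) \<in> W p" "(b,a) \<in> W q" by (meson subsetD)+
      then have "b \<in> snd p" "a \<in> snd q" unfolding W_def using pq(3,4) by auto
      moreover have pnq: "p \<noteq> q" using ab pq by blast
      moreover have "fst q \<notin> snd p \<or> fst p \<notin> snd q"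
        using Msep J(1) pq(1,2) pnq unfolding sep_def by blast
      ultimately show False using pq(3,4) by simp
    qed
    moreover have "openin X (U1 \<inter> V1)" using UV(1,2) by (rule openin_Int)
    moreover have "z \<in> U1 \<inter> V1" using UV(3,4) by blast
    ultimately show ?thesis by blast
  qed
  show False by (rule cc_discrete[OF cc t1 AX infA loc])
qed

lemma sep_countable_metrizable:
  fixes M :: "('a \<Rightarrow> real) set"
  assumes comp: "compact_space X" and cM: "countable M"
    and cont: "\<And>g. g \<in> M \<Longrightarrow> continuous_map X euclideanreal g"
    and sepM: "\<And>x y. x \<in> topspace X \<Longrightarrow> y \<in> topspace X \<Longrightarrow> x \<noteq> y \<Longrightarrow> \<exists>g\<in>M. g x \<noteq> g y"
  shows "metrizable_space X"
proof -
  define e where "e x = restrict (\<lambda>g. g x) M" for x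
  define P where "P = product_topology (\<lambda>_. euclideanreal) M"
  have "continuous_map X P e"
    unfolding P_def continuous_map_componentwise
  proof
    show "e ` topspace X \<subseteq> extensional M" unfolding e_def by auto
    show "\<forall>k\<in>M. continuous_map X euclideanreal (\<lambda>x. e x k)"
    proof
      fix k assume k: "k \<in> M"
      have "(\<lambda>x. e x k) = k" using k unfolding e_def by auto
      then show "continuous_map X euclideanreal (\<lambda>x. e x k)" using cont[OF k] by simp
    qed
  qed
  moreover have "Hausdorff_space P" unfolding P_def
    by (simp add: Hausdorff_space_product_topology)
  moreover have "inj_on e (topspace X)"
  proof
    fix x y assume xy: "x \<in> topspace X" "y \<in> topspace X" "e x = e y"
    show "x = y"
    proof (rule ccontr)
      assume "x \<noteq> y"
      then obtain g where "g \<in> M" "g x \<noteq> g y" using sepM xy(1,2) by blast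
      moreover have "e x g = e y g" using xy(3) by simp
      ultimately show False unfolding e_def by simp
    qed
  qed
  ultimately have "embedding_map X P e" using comp by (intro continuous_imp_embedding_map)
  then have hom: "X homeomorphic_space (subtopology P (e ` topspace X))"
    by (rule embedding_map_imp_homeomorphic_space)
  have "metrizable_space P" unfolding P_def metrizable_space_product_topology
  proof (rule disjI2, rule conjI)
    show "countable {i \<in> M. \<not> (\<exists>a. topspace euclideanreal \<subseteq> {a})}"
      using cM by (rule countable_subset[rotated]) auto
    show "\<forall>i\<in>M. metrizable_space euclideanreal" by (simp add: metrizable_space_euclidean)
  qed
  then have "metrizable_space (subtopology P (e ` topspace X))" by (rule metrizable_space_subtopology)
  then show ?thesis using hom homeomorphic_metrizable_space by blast
qed

lemma floor_close:
  fixes a b :: real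
  assumes "floor (a * 10) = floor (b * 10)"
  shows "\<bar>a - b\<bar> < 1/10"
proof -
  have "of_int (floor (a*10)) \<le> a*10" "a*10 < of_int (floor (a*10)) + 1"
       "of_int (floor (b*10)) \<le> b*10" "b*10 < of_int (floor (b*10)) + 1"
    by linarith+
  moreover have "real_of_int (floor (a*10)) = real_of_int (floor (b*10))" using assms by simp
  ultimately have "a - b < 1/10" "b - a < 1/10" by linarith+
  then show ?thesis unfolding abs_less_iff by linarith
qed

lemma compact_metrizable:
  assumes comp: "compact_space X" and cr: "completely_regular_space X" and t1: "t1_space X"
    and cal: "calibre_omega1_omega (diag_nbhds X) (\<lambda>U V. V \<subseteq> U)"
  shows "metrizable_space X"
proof -
  define C where "C = {f. continuous_map X euclideanreal f \<and> (\<forall>x\<in>topspace X. f x \<in> {0..1})}"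
  define sepf where "sepf S \<longleftrightarrow> (\<forall>f\<in>S. \<forall>g\<in>S. f \<noteq> g \<longrightarrow> (\<exists>z\<in>topspace X. 3/10 \<le> \<bar>f z - g z\<bar>))"
    for S :: "('a \<Rightarrow> real) set"
  define A where "A = {S. S \<subseteq> C \<and> sepf S}"
  have "\<forall>Ch\<in>chains A. \<Union>Ch \<in> A"
  proof
    fix Ch assume Ch: "Ch \<in> chains A"
    then have CA: "Ch \<subseteq> A" and ch: "\<forall>S1\<in>Ch. \<forall>S2\<in>Ch. S1 \<subseteq> S2 \<or> S2 \<subseteq> S1"
      unfolding chains_def chain_subset_def by auto
    have "\<Union>Ch \<subseteq> C" using CA A_def by auto
    moreover have "sepf (\<Union>Ch)"
      unfolding sepf_def
    proof (intro ballI impI)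
      fix p q assume p: "p \<in> \<Union>Ch" and q: "q \<in> \<Union>Ch" and pq: "p \<noteq> q"
      then obtain S1 S2 where S: "S1 \<in> Ch" "S2 \<in> Ch" "p \<in> S1" "q \<in> S2" by blast
      then have "p \<in> S1 \<union> S2 \<and> q \<in> S1 \<union> S2" by blast
      moreover have "S1 \<union> S2 \<in> Ch" using ch S(1,2) by (metis sup.absorb1 sup.absorb2)
      ultimately obtain S where S: "S \<in> Ch" "p \<in> S" "q \<in> S" by blast
      then have "sepf S" using CA A_def by auto
      then show "\<exists>z\<in>topspace X. 3/10 \<le> \<bar>p z - q z\<bar>" using S(2,3) pq unfolding sepf_def by blast
    qed
    ultimately show "\<Union>Ch \<in> A" using A_def by blast
  qed
  then obtain M where MA: "M \<in> A" and Mmax: "\<forall>S\<in>A. M \<subseteq> S \<longrightarrow> S = M"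
    using Zorn_Lemma by blast
  have MC: "M \<subseteq> C" and Msep: "sepf M" using MA A_def by auto
  have net: "\<exists>g\<in>M. \<forall>z\<in>topspace X. \<bar>h z - g z\<bar> < 3/10" if hC: "h \<in> C" for h
  proof (cases "h \<in> M")
    case True then show ?thesis by (intro bexI[of _ h]) auto
  next
    case False
    show ?thesis
    proof (rule ccontr)
      assume nt: "\<not> ?thesis"
      have "sepf (insert h M)" unfolding sepf_def
      proof (intro ballI impI)
        fix p q assume p: "p \<in> insert h M" and q: "q \<in> insert h M" and pq: "p \<noteq> q"
        show "\<exists>z\<in>topspace X. 3/10 \<le> \<bar>p z - q z\<bar>"
        proof (cases "p = h")
          case True
          then have "q \<in> M" using q pq by auto
          then obtain z where "z \<in> topspace X" "\<not> \<bar>h z - q z\<bar> < 3/10" using nt by blast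
          then show ?thesis using True by (intro bexI[of _ z]) auto
        next
          case False
          then have pM: "p \<in> M" using p by auto
          show ?thesis
          proof (cases "q = h")
            case True
            obtain z where "z \<in> topspace X" "\<not> \<bar>h z - p z\<bar> < 3/10" using nt pM by blast
            then show ?thesis using True by (intro bexI[of _ z]) (auto simp: abs_minus_commute)
          next
            case False
            then have "q \<in> M" using q by auto
            then show ?thesis using Msep pM pq unfolding sepf_def by blast
          qed
        qed
      qed
      moreover have "insert h M \<subseteq> C" using MC hC by blast
      ultimately have "insert h M \<in> A" using A_def by blast
      then have "insert h M = M" using Mmax by blast
      then show False using False by blast
    qed
  qed
  have cM: "countable M"
  proof (rule ccontr)
    assume unc: "uncountable M"
    define W where "W f = {p \<in> topspace (prod_topology X X). (\<lambda>p. f (fst p) - f (snd p)) p \<in> {-1/10<..<1/10}}"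
      for f :: "'a \<Rightarrow> real"
    have WD: "W ` M \<subseteq> diag_nbhds X"
    proof
      fix w assume "w \<in> W ` M"
      then obtain f where f: "f \<in> M" "w = W f" by blast
      have fc: "continuous_map X euclideanreal f" using f(1) MC C_def by auto
      have "continuous_map (prod_topology X X) euclideanreal (f \<circ> fst)"
        using continuous_map_fst fc by (rule continuous_map_compose)
      moreover have "continuous_map (prod_topology X X) euclideanreal (f \<circ> snd)"
        using continuous_map_snd fc by (rule continuous_map_compose)
      ultimately have "continuous_map (prod_topology X X) euclideanreal (\<lambda>p. (f \<circ> fst) p - (f \<circ> snd) p)"
        by (rule continuous_map_diff)
      then have "continuous_map (prod_topology X X) euclideanreal (\<lambda>p. f (fst p) - f (snd p))"
        by (simp add: o_def)
      then have "openin (prod_topology X X) w"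
        unfolding f(2) W_def by (rule openin_continuous_map_preimage) simp
      moreover have "(\<lambda>x. (x, x)) ` topspace X \<subseteq> w"
        unfolding f(2) W_def by auto
      ultimately show "w \<in> diag_nbhds X" unfolding diag_nbhds_def by blast
    qed
    obtain J u where J: "J \<subseteq> M" "infinite J" and u: "u \<in> diag_nbhds X" "\<forall>f\<in>J. u \<subseteq> W f"
      using calibre_family[OF cal unc WD] by blast
    have uo: "openin (prod_topology X X) u" and ud: "\<And>z. z \<in> topspace X \<Longrightarrow> (z,z) \<in> u"
      using u(1) unfolding diag_nbhds_def by auto
    have "\<forall>z\<in>topspace X. \<exists>N. openin X N \<and> z \<in> N \<and> N \<times> N \<subseteq> u"
    proof
      fix z assume z: "z \<in> topspace X"
      have "\<exists>U V. openin X U \<and> openin X V \<and> z \<in> U \<and> z \<in> V \<and> U \<times> V \<subseteq> u"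
        using uo ud[OF z] unfolding openin_prod_topology_alt by simp
      then obtain U1 V1 where UV: "openin X U1" "openin X V1" "z \<in> U1" "z \<in> V1" "U1 \<times> V1 \<subseteq> u"
        by blast
      have "openin X (U1 \<inter> V1)" using UV(1,2) by (rule openin_Int)
      moreover have "(U1 \<inter> V1) \<times> (U1 \<inter> V1) \<subseteq> u" using UV(5) by blast
      ultimately show "\<exists>N. openin X N \<and> z \<in> N \<and> N \<times> N \<subseteq> u" using UV(3,4) by blast
    qed
    then obtain N where N: "\<And>z. z \<in> topspace X \<Longrightarrow> openin X (N z) \<and> z \<in> N z \<and> N z \<times> N z \<subseteq> u"
      by metis
    have "\<forall>V\<in>N ` topspace X. openin X V" using N by blast
    moreover have "topspace X \<subseteq> \<Union>(N ` topspace X)" using N by blast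
    ultimately obtain F where F: "finite F" "F \<subseteq> N ` topspace X" "topspace X \<subseteq> \<Union>F"
      using comp unfolding compact_space_alt by meson
    then obtain Z where Z: "Z \<subseteq> topspace X" "finite Z" "F = N ` Z" by (meson finite_subset_image)
    define key where "key f = restrict (\<lambda>z. floor (f z * 10)) Z" for f :: "'a \<Rightarrow> real"
    have "key ` J \<subseteq> (\<Pi>\<^sub>E z\<in>Z. {0..10})"
    proof
      fix k assume "k \<in> key ` J"
      then obtain f where f: "f \<in> J" "k = key f" by blast
      have "\<forall>x\<in>topspace X. f x \<in> {0..1}" using f(1) J(1) MC C_def by auto
      have "\<forall>z\<in>Z. floor (f z * 10) \<in> {0..10}"
      proof
        fix z assume "z \<in> Z"
        then have "f z \<in> {0..1}" using Z(1) \<open>\<forall>x\<in>topspace X. f x \<in> {0..1}\<close> by blast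
        then have "0 \<le> f z * 10" "f z * 10 < 11" by auto
        then show "floor (f z * 10) \<in> {0..10}" by (auto simp: floor_le_iff)
      qed
      then show "k \<in> (\<Pi>\<^sub>E z\<in>Z. {0..10})" using f(2) key_def by auto
    qed
    moreover have "finite (\<Pi>\<^sub>E z\<in>Z. {0..10::int})" using Z(2) by (intro finite_PiE) auto
    ultimately have "finite (key ` J)" by (rule finite_subset)
    then have "\<not> inj_on key J" using J(2) finite_imageD by blast
    then obtain f g where fg: "f \<in> J" "g \<in> J" "f \<noteq> g" "key f = key g" unfolding inj_on_def by blast
    have close: "\<bar>f z - g z\<bar> < 1/10" if "z \<in> Z" for z
    proof -
      have "key f z = key g z" using fg(4) by simp
      then have "floor (f z * 10) = floor (g z * 10)" using that key_def by simp
      then show ?thesis by (rule floor_close)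
    qed
    have "\<forall>b\<in>topspace X. \<bar>f b - g b\<bar> < 3/10"
    proof
      fix b assume b: "b \<in> topspace X"
      then obtain z where z: "z \<in> Z" "b \<in> N z" using F(3) Z(3) by blast
      have zX: "z \<in> topspace X" using z(1) Z(1) by blast
      have "(z,b) \<in> N z \<times> N z" using N[OF zX] z(2) by blast
      then have zb: "(z,b) \<in> u" using N[OF zX] by blast
      have "(z,b) \<in> W f" "(z,b) \<in> W g" using zb u(2) fg(1,2) by blast+
      then have "f z - f b \<in> {-1/10<..<1/10}" "g z - g b \<in> {-1/10<..<1/10}" unfolding W_def by auto
      then have "-1/10 < f z - f b" "f z - f b < 1/10" "-1/10 < g z - g b" "g z - g b < 1/10" by auto
      then show "\<bar>f b - g b\<bar> < 3/10" using close[OF z(1)] unfolding abs_less_iff by linarith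
    qed
    moreover have "\<exists>z\<in>topspace X. 3/10 \<le> \<bar>f z - g z\<bar>"
      using Msep J(1) fg(1,2,3) unfolding sepf_def by blast
    ultimately show False by fastforce
  qed
  have sepM: "\<exists>g\<in>M. g x \<noteq> g y" if xy: "x \<in> topspace X" "y \<in> topspace X" "x \<noteq> y" for x y
  proof -
    have c1: "closedin X {y}" using t1 xy(2) by (simp add: t1_space_closedin_singleton)
    have c2: "x \<in> topspace X - {y}" using xy by blast
    have "\<exists>h::'a\<Rightarrow>real. continuous_map X (top_of_set {0..1}) h \<and> h x = 0 \<and> h ` {y} \<subseteq> {1}"
      using completely_regular_space_def[THEN meta_eq_to_obj_eq, THEN iffD1, OF cr, rule_format, OF conjI[OF c1 c2]] .
    then obtain h :: "'a \<Rightarrow> real" where h: "continuous_map X (top_of_set {0..1}) h" "h x = 0" "h ` {y} \<subseteq> {1}"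
      by blast
    have hh: "continuous_map X euclideanreal h \<and> h \<in> topspace X \<rightarrow> {0..1}"
      using h(1) unfolding continuous_map_in_subtopology .
    then have "h \<in> C" unfolding C_def by auto
    then obtain g where g: "g \<in> M" "\<forall>z\<in>topspace X. \<bar>h z - g z\<bar> < 3/10" using net by blast
    have a1: "\<bar>h x - g x\<bar> < 3/10" using g(2) xy(1) by blast
    have a2: "\<bar>h y - g y\<bar> < 3/10" using g(2) xy(2) by blast
    have hy: "h y = 1" using h(3) by simp
    have "g x \<noteq> g y"
    proof
      assume "g x = g y"
      then show False using a1 a2 hy h(2) unfolding abs_less_iff by linarith
    qed
    then show ?thesis using g(1) by blast
  qed
  show ?thesis
  proof (rule sep_countable_metrizable[OF comp cM])
    show "\<And>g. g \<in> M \<Longrightarrow> continuous_map X euclideanreal g" using MC C_def by auto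
    show "\<And>x y. x \<in> topspace X \<Longrightarrow> y \<in> topspace X \<Longrightarrow> x \<noteq> y \<Longrightarrow> \<exists>g\<in>M. g x \<noteq> g y"
      by (rule sepM)
  qed
qed


theorem mainTheorem12:
  fixes X :: "'a topology"
  assumes "tychonoff_space X"
    and "calibre_omega1_omega (diag_nbhds X) (\<lambda>U V. V \<subseteq> U)"
    and "countably_compact_space X"
  shows "compact_space X \<and> metrizable_space X"
proof -
  have cr: "completely_regular_space X" and t1: "t1_space X"
    using assms(1) unfolding tychonoff_space_def by auto
  have comp: "compact_space X" using cc_compact[OF t1 assms(2) assms(3)] .
  have "metrizable_space X" using compact_metrizable[OF comp cr t1 assms(2)] .
  then show ?thesis using comp by blast
qed

end
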